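(* Let $P_0$ be a probability distribution on $\mathbb{R}^{d_0}$ with compact support $S$, let $\epsilon>0$, and let $\mathcal{P}(P_0,\epsilon)=\{P : W_\infty(P_0,P)\le \epsilon\}$. Let $g:\mathbb{R}^{d_0}\to\mathbb{R}^{d}$ ($d<d_0$) be continuous with a continuous map $g^{-1}:\mathbb{R}^d\to\mathbb{R}^{d_0}$, and let $\ell(\bm\theta,\cdot):\mathbb{R}^{d_0}\to[0,M]$ be a continuous loss satisfying the on-manifold assumption $\ell(\bm\theta,\bm x)=\ell(\bm\theta,g^{-1}(g(\bm x)))$ for all $\bm x\in\mathbb{R}^{d_0}$. Define $$\epsilon_z=\sup_{\bm x\in S}\ \sup_{\|\bm\delta_x\|_\infty\le\epsilon}\|g(\bm x)-g(\bm x+\bm\delta_x)\|_\infty .$$ Then $$\sup_{P\in\mathcal{P}(P_0,\epsilon)}\mathbb{E}_{\bm x'\sim P}[\ell(\bm\theta,\bm x')]\ \le\ \mathbb{E}_{\bm x\sim P_0}\Big[\sup_{\|\bm\delta_z\|_\infty\le\epsilon_z}\ell\big(\bm\theta,g^{-1}(g(\bm x)+\bm\delta_z)\big)\Big].$$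
   Context: $W_\infty$ denotes the $\infty$-Wasserstein distance, $W_\infty(P,Q)=\inf_{\lambda\in\Lambda(P,Q)}\operatorname{ess\,sup}_{(x,y)\sim\lambda}\|x-y\|_\infty$, where $\Lambda(P,Q)$ is the set of couplings of $P$ and $Q$. The loss $\ell(\bm\theta,\bm x)=\mathbb{E}_{y\sim P_{y\mid\bm x}}[\mathcal{L}(\bm\theta,\bm x,y)]$ is the expected classification loss of a model with parameters $\bm\theta$ at input $\bm x$; $\bm\theta$ is fixed throughout. The map $g$ is a projection onto a lower-dimensional "primary feature" (latent) space and $g^{-1}$ a reconstruction map; the on-manifold assumption says reconstruction preserves the loss for all inputs, including those from distributions in $\mathcal{P}(P_0,\epsilon)$. *)

theory Defs
  imports "HOL-Probability.Probability"
begin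

definition prob_distr :: "'a::euclidean_space measure \<Rightarrow> bool" where
  "prob_distr P \<longleftrightarrow> prob_space P \<and> sets P = sets (borel :: 'a measure)"

definition couplings :: "'a::euclidean_space measure \<Rightarrow> 'a measure \<Rightarrow> ('a \<times> 'a) measure set" where
  "couplings P Q = {L. prob_space L \<and> sets L = sets (borel :: ('a \<times> 'a) measure)
      \<and> distr L borel fst = P \<and> distr L borel snd = Q}"

definition W_inf :: "'a::euclidean_space measure \<Rightarrow> 'a measure \<Rightarrow> ereal" where
  "W_inf P Q = (INF L \<in> couplings P Q. esssup L (\<lambda>(x, y). ereal (infnorm (x - y))))"

definition W_ball :: "'a::euclidean_space measure \<Rightarrow> real \<Rightarrow> 'a measure set" where
  "W_ball P0 eps = {P. prob_distr P \<and> W_inf P0 P \<le> ereal eps}"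

definition msupport :: "'a::euclidean_space measure \<Rightarrow> 'a set" where
  "msupport P = {x. \<forall>e>0. emeasure P (ball x e) > 0}"

end

theory Submission imports Defs begin

lemma space_pd: "prob_distr (P::'a::euclidean_space measure) \<Longrightarrow> space P = UNIV"
  unfolding prob_distr_def by (metis sets_eq_imp_space_eq space_borel)

lemma support_full:
  fixes P :: "'a::euclidean_space measure"
  assumes "prob_distr P"
  shows "emeasure P (- msupport P) = 0"
proof -
  have sp: "sets P = sets borel" using assms unfolding prob_distr_def by simp
  obtain B :: "'a set set" where B: "countable B" "\<And>C. C \<in> B \<Longrightarrow> open C"
    "\<And>S. open S \<Longrightarrow> \<exists>U. U \<subseteq> B \<and> S = \<Union>U"
    by (rule univ_second_countable) blast
  let ?N = "{b \<in> B. emeasure P b = 0}"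
  have sub: "- msupport P \<subseteq> \<Union>?N"
  proof
    fix z assume "z \<in> - msupport P"
    then obtain e where e: "e > 0" "\<not> emeasure P (ball z e) > 0" unfolding msupport_def by auto
    hence e0: "emeasure P (ball z e) = 0" by (simp add: not_gr_zero)
    obtain U where U: "U \<subseteq> B" "ball z e = \<Union>U" using B(3)[of "ball z e"] by auto
    then obtain b where b: "b \<in> U" "z \<in> b" using e(1) by (metis UnionE centre_in_ball)
    have "b \<subseteq> ball z e" using U b by auto
    moreover have "b \<in> sets P" using B(2) U b sp by auto
    moreover have "ball z e \<in> sets P" using sp by simp
    ultimately have "emeasure P b \<le> emeasure P (ball z e)" by (intro emeasure_mono)
    hence "emeasure P b = 0" using e0 by simp
    thus "z \<in> \<Union>?N" using U b by auto
  qed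
  have "(\<Union>b\<in>?N. b) \<in> null_sets P"
  proof (rule null_sets_UN')
    show "countable ?N" using B(1) by simp
    show "\<And>b. b \<in> ?N \<Longrightarrow> b \<in> null_sets P" using B(2) sp by (auto simp: null_sets_def)
  qed
  moreover have "- msupport P \<in> sets P"
  proof -
    have "closed (msupport P)"
      unfolding closed_def
    proof (rule openI)
      fix z assume "z \<in> - msupport P"
      then obtain e where e: "e > 0" "emeasure P (ball z e) = 0" unfolding msupport_def
        by (auto simp: not_gr_zero)
      have "ball z e \<subseteq> - msupport P"
      proof
        fix w assume w: "w \<in> ball z e"
        define r where "r = e - dist z w"
        have r: "r > 0" using w unfolding r_def by simp
        have "ball w r \<subseteq> ball z e" unfolding r_def
          by (auto simp: subset_eq dist_commute) (smt (verit) dist_triangle dist_commute)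
        hence "emeasure P (ball w r) \<le> emeasure P (ball z e)"
          using sp by (intro emeasure_mono) auto
        thus "w \<in> - msupport P" using e r unfolding msupport_def by (auto intro!: exI[of _ r])
      qed
      thus "\<exists>e>0. ball z e \<subseteq> - msupport P" using e(1) by auto
    qed
    thus ?thesis using sp by (simp add: borel_closed)
  qed
  ultimately show ?thesis using sub
    by (metis image_ident null_sets_subset null_setsD1)
qed


lemma meas_infnorm_diff:
  "(\<lambda>p::('a::euclidean_space \<times> 'a). ereal (infnorm (fst p - snd p))) \<in> borel_measurable borel"
  by (intro borel_measurable_continuous_onI continuous_intros)

lemma meas_infnorm_diff2:
  "(\<lambda>(x::'a::euclidean_space, y). ereal (infnorm (x - y))) \<in> borel_measurable borel"
proof -
  have "(\<lambda>(x::'a, y). ereal (infnorm (x - y))) = (\<lambda>p. ereal (infnorm (fst p - snd p)))" by auto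
  thus ?thesis using meas_infnorm_diff by simp
qed

lemma self_in_ball:
  fixes P :: "'a::euclidean_space measure"
  assumes "prob_distr P" "eps \<ge> 0"
  shows "P \<in> W_ball P eps"
proof -
  have sp: "sets P = sets borel" and ps: "prob_space P" using assms unfolding prob_distr_def by auto
  define D where "D = (\<lambda>x::'a. (x, x))"
  have Dm: "D \<in> measurable P borel"
    unfolding D_def by (subst measurable_cong_sets[OF sp refl]) (intro borel_measurable_continuous_onI continuous_intros)
  define L where "L = distr P borel D"
  have fm: "fst \<in> measurable (borel :: ('a \<times> 'a) measure) borel"
    by (intro borel_measurable_continuous_onI continuous_intros)
  have sm: "snd \<in> measurable (borel :: ('a \<times> 'a) measure) borel"
    by (intro borel_measurable_continuous_onI continuous_intros)
  have "distr L borel fst = distr P borel (fst \<circ> D)"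
    unfolding L_def using Dm fm by (simp add: distr_distr)
  also have "\<dots> = P" using sp by (simp add: D_def comp_def distr_id2)
  finally have f: "distr L borel fst = P" .
  have "distr L borel snd = distr P borel (snd \<circ> D)"
    unfolding L_def using Dm sm by (simp add: distr_distr)
  also have "\<dots> = P" using sp by (simp add: D_def comp_def distr_id2)
  finally have s: "distr L borel snd = P" .
  have pL: "prob_space L" unfolding L_def using ps Dm by (simp add: prob_space.prob_space_distr)
  have Lc: "L \<in> couplings P P" unfolding couplings_def using f s pL by (simp add: L_def)
  have "AE p in L. ereal (infnorm (fst p - snd p)) \<le> 0"
    unfolding L_def
  proof (subst AE_distr_iff[OF Dm])
    show "{x \<in> space borel. ereal (infnorm (fst x - snd x)) \<le> 0} \<in> sets borel"
      using meas_infnorm_diff by measurable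
    show "AE x in P. ereal (infnorm (fst (D x) - snd (D x))) \<le> 0" by (simp add: D_def infnorm_0)
  qed
  hence "esssup L (\<lambda>(x, y). ereal (infnorm (x - y))) \<le> 0"
    using meas_infnorm_diff2
    unfolding L_def by (intro esssup_I) (auto simp: case_prod_beta)
  hence "W_inf P P \<le> 0" unfolding W_inf_def using Lc by (meson INF_lower2)
  thus ?thesis unfolding W_ball_def using assms by (auto intro: order_trans)
qed


theorem lemma1:
  fixes P0 :: "(real ^ 'n) measure"
    and eps M :: real
    and g :: "real ^ 'n \<Rightarrow> real ^ 'm"
    and ginv :: "real ^ 'm \<Rightarrow> real ^ 'n"
    and l :: "real ^ 'n \<Rightarrow> real"
  assumes "prob_distr P0"
    and "compact (msupport P0)"
    and "eps > 0"
    and "CARD('m) < CARD('n)"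
    and "continuous_on UNIV g"
    and "continuous_on UNIV ginv"
    and "continuous_on UNIV l"
    and "\<And>x. 0 \<le> l x \<and> l x \<le> M"
    and "\<And>x. l x = l (ginv (g x))"
  shows "(let eps_z = (SUP x \<in> msupport P0. SUP dx \<in> {dx. infnorm dx \<le> eps}.
                         infnorm (g x - g (x + dx)))
          in (SUP P \<in> W_ball P0 eps. integral\<^sup>L P l)
             \<le> integral\<^sup>L P0 (\<lambda>x. SUP dz \<in> {dz. infnorm dz \<le> eps_z}. l (ginv (g x + dz))))"
proof -
  define S where "S = msupport P0"
  define E where "E = (\<lambda>x. SUP dx \<in> {dx. infnorm dx \<le> eps}. infnorm (g x - g (x + dx)))"
  define ez where "ez = (SUP x \<in> S. E x)"
  define K where "K = {dz::real^'m. infnorm dz \<le> ez}"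
  define h where "h = (\<lambda>x. SUP dz \<in> K. l (ginv (g x + dz)))"
  have sp0: "sets P0 = sets borel" and ps0: "prob_space P0" using assms(1) unfolding prob_distr_def by auto
  have spc0: "space P0 = UNIV" using space_pd[OF assms(1)] .
  have null: "emeasure P0 (- S) = 0" using support_full[OF assms(1)] S_def by simp
  have Sne: "S \<noteq> {}"
  proof
    assume "S = {}"
    hence "emeasure P0 UNIV = 0" using null by simp
    thus False using prob_space.emeasure_space_1[OF ps0] spc0 by simp
  qed
  define n where "n = sqrt (real CARD('n))"
  have n1: "n \<ge> 1" unfolding n_def by simp
  have nle: "\<And>x::real^'n. norm x \<le> n * infnorm x" using norm_le_infnorm unfolding n_def by (metis DIM_cart DIM_real mult.right_neutral)
  define T where "T = {x + y | x y. x \<in> S \<and> y \<in> cball (0::real^'n) (n * eps)}"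
  have "compact T" unfolding T_def using assms(2) S_def by (intro compact_sums) auto
  hence "compact (g ` T)" using assms(5) by (meson compact_continuous_image continuous_on_subset subset_UNIV)
  then obtain B where B: "\<And>z. z \<in> T \<Longrightarrow> norm (g z) \<le> B"
    by (meson compact_imp_bounded bounded_iff imageI)
  have bnd: "infnorm (g x - g (x + dx)) \<le> 2 * B" if "x \<in> S" "infnorm dx \<le> eps" for x dx
  proof -
    have "x + 0 \<in> T" unfolding T_def using that(1) assms(3) n1 by (intro CollectI exI[of _ x] exI[of _ 0]) auto
    hence b1: "norm (g x) \<le> B" using B by simp
    have "norm dx \<le> n * eps" using nle[of dx] that(2) n1 by (smt (verit) mult_left_mono)
    hence "x + dx \<in> T" unfolding T_def using that(1) by (intro CollectI exI[of _ x] exI[of _ dx]) auto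
    hence b2: "norm (g (x + dx)) \<le> B" using B by simp
    have "infnorm (g x - g (x + dx)) \<le> norm (g x - g (x + dx))" by (rule infnorm_le_norm)
    also have "\<dots> \<le> norm (g x) + norm (g (x + dx))" by (rule norm_triangle_ineq4)
    finally show ?thesis using b1 b2 by simp
  qed
  have Dne: "{dx::real^'n. infnorm dx \<le> eps} \<noteq> {}" using assms(3) by (auto intro!: exI[of _ 0] simp: infnorm_0)
  have bddE: "bdd_above ((\<lambda>dx. infnorm (g x - g (x + dx))) ` {dx. infnorm dx \<le> eps})" if "x \<in> S" for x
    using bnd[OF that] by (auto intro!: bdd_aboveI[of _ "2*B"])
  have E2B: "E x \<le> 2 * B" if "x \<in> S" for x
    unfolding E_def using bnd[OF that] Dne by (intro cSUP_least) auto
  have bddS: "bdd_above (E ` S)" using E2B by (auto intro!: bdd_aboveI[of _ "2*B"])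
  have key1: "infnorm (g x - g y) \<le> ez" if "x \<in> S" "infnorm (y - x) \<le> eps" for x y
  proof -
    have "infnorm (g x - g (x + (y - x))) \<le> E x"
      unfolding E_def using that by (intro cSUP_upper bddE) auto
    also have "\<dots> \<le> ez" unfolding ez_def using that bddS by (intro cSUP_upper) auto
    finally show ?thesis by simp
  qed
  have ez0: "0 \<le> ez"
  proof -
    obtain x where "x \<in> S" using Sne by auto
    from key1[OF this, of x] assms(3) show ?thesis by (simp add: infnorm_0)
  qed
  have Kne: "0 \<in> K" unfolding K_def using ez0 by (simp add: infnorm_0)
  have bddK: "bdd_above ((\<lambda>dz. l (ginv (g x + dz))) ` K)" for x
    using assms(8) by (auto intro!: bdd_aboveI[of _ M])
  have hM: "h x \<le> M" for x unfolding h_def using Kne assms(8) by (intro cSUP_least) auto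
  have h0: "0 \<le> h x" for x
  proof -
    have "l (ginv (g x + 0)) \<le> h x" unfolding h_def using Kne bddK by (intro cSUP_upper)
    thus ?thesis using assms(8)[of "ginv (g x + 0)"] by linarith
  qed
  have key: "l y \<le> h x" if "x \<in> S" "infnorm (y - x) \<le> eps" for x y
  proof -
    have "g y - g x \<in> K" unfolding K_def using key1[OF that] by (simp add: infnorm_sub)
    hence "l (ginv (g x + (g y - g x))) \<le> h x" unfolding h_def using bddK by (intro cSUP_upper)
    thus ?thesis using assms(9)[of y] by simp
  qed
  have hmeas: "h \<in> borel_measurable borel"
    unfolding borel_measurable_iff_greater
  proof
    fix a
    have "{w \<in> space borel. a < h w} = (\<Union>dz\<in>K. {w. a < l (ginv (g w + dz))})"
      unfolding h_def using less_cSUP_iff[OF _ bddK] Kne by auto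
    moreover have "open {w. a < l (ginv (g w + dz))}" for dz
      by (intro open_Collect_less continuous_intros continuous_on_compose2[OF assms(7)]
          continuous_on_compose2[OF assms(6)] continuous_on_compose2[OF assms(5)]) auto
    ultimately show "{w \<in> space borel. a < h w} \<in> sets borel" by (simp add: borel_open open_UN)
  qed
  have lmeas: "l \<in> borel_measurable borel" using assms(7) by (rule borel_measurable_continuous_onI)
  have main: "integral\<^sup>L P l \<le> integral\<^sup>L P0 h" if "P \<in> W_ball P0 eps" for P
  proof -
    have Pd: "prob_distr P" and WP: "W_inf P0 P \<le> ereal eps" using that unfolding W_ball_def by auto
    show ?thesis
    proof (rule field_le_epsilon)
      fix \<delta> :: real assume d0: "0 < \<delta>"
      define R where "R = n * (eps + 1)"
      define C where "C = {x + y | x y. x \<in> S \<and> y \<in> cball (0::real^'n) R}"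
      have "compact C" unfolding C_def using assms(2) S_def by (intro compact_sums) auto
      hence "uniformly_continuous_on C l" using assms(7)
        by (meson compact_uniformly_continuous continuous_on_subset subset_UNIV)
      then obtain \<eta> where eta: "\<eta> > 0" "\<And>x x'. x \<in> C \<Longrightarrow> x' \<in> C \<Longrightarrow> dist x' x < \<eta> \<Longrightarrow> dist (l x') (l x) < \<delta>"
        unfolding uniformly_continuous_on_def using d0 by metis
      define \<eta>' where "\<eta>' = min 1 (\<eta> / (2 * n))"
      have e1: "\<eta>' > 0" "\<eta>' \<le> 1" using eta(1) n1 unfolding \<eta>'_def by auto
      have e2: "n * \<eta>' < \<eta>"
      proof -
        have "n * \<eta>' \<le> n * (\<eta> / (2 * n))" using n1 unfolding \<eta>'_def by (intro mult_left_mono) auto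
        also have "\<dots> = \<eta> / 2" using n1 by (simp add: field_simps)
        finally show ?thesis using eta(1) by simp
      qed
      have "W_inf P0 P < ereal (eps + \<eta>')" 
      proof -
        have "ereal eps < ereal (eps + \<eta>')" using e1 by simp
        with WP show ?thesis by (rule le_less_trans)
      qed
      then obtain L where L: "L \<in> couplings P0 P"
          "esssup L (\<lambda>(x, y). ereal (infnorm (x - y))) < ereal (eps + \<eta>')"
        unfolding W_inf_def INF_less_iff by auto
      have pL: "prob_space L" and sL: "sets L = sets borel" and fL: "distr L borel fst = P0"
        and sL2: "distr L borel snd = P" using L(1) unfolding couplings_def by auto
      have fstm: "fst \<in> measurable L borel"
        by (subst measurable_cong_sets[OF sL refl]) (intro borel_measurable_continuous_onI continuous_intros)
      have sndm: "snd \<in> measurable L borel"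
        by (subst measurable_cong_sets[OF sL refl]) (intro borel_measurable_continuous_onI continuous_intros)
      have AE1: "AE p in L. infnorm (fst p - snd p) < eps + \<eta>'"
        using esssup_AE[where M=L and f="\<lambda>(x, y). ereal (infnorm (x - y))"]
      proof eventually_elim
        case (elim p)
        hence "ereal (infnorm (fst p - snd p)) \<le> esssup L (\<lambda>(x, y). ereal (infnorm (x - y)))"
          by (simp add: case_prod_beta)
        from le_less_trans[OF this L(2)] show ?case by simp
      qed
      have AE2: "AE p in L. fst p \<in> S"
      proof (rule AE_I')
        have cS: "- S \<in> sets borel" using assms(2) S_def by (simp add: borel_open compact_imp_closed open_Compl)
        have "emeasure L (fst -` (- S) \<inter> space L) = emeasure (distr L borel fst) (- S)"
          using emeasure_distr[OF fstm cS] by simp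
        also have "\<dots> = 0" using fL null by simp
        finally show "fst -` (- S) \<inter> space L \<in> null_sets L"
          using measurable_sets[OF fstm cS] by (simp add: null_sets_def)
        show "{p \<in> space L. fst p \<notin> S} \<subseteq> fst -` (- S) \<inter> space L" by auto
      qed
      have AE3: "AE p in L. l (snd p) \<le> h (fst p) + \<delta>"
        using AE1 AE2
      proof eventually_elim
        case (elim p)
        obtain x y where p: "p = (x, y)" by (cases p)
        have xS: "x \<in> S" and dxy: "infnorm (y - x) < eps + \<eta>'" using elim p by (auto simp: infnorm_sub)
        define t where "t = eps / (eps + \<eta>')"
        have t0: "0 \<le> t" and t1: "t \<le> 1" using assms(3) e1 unfolding t_def by auto
        have omt: "1 - t = \<eta>' / (eps + \<eta>')" using assms(3) e1 unfolding t_def by (simp add: field_simps)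
        define y' where "y' = x + t *\<^sub>R (y - x)"
        have "infnorm (y' - x) = t * infnorm (y - x)" unfolding y'_def using t0 by (simp add: infnorm_mul)
        also have "\<dots> \<le> t * (eps + \<eta>')" using dxy t0 by (intro mult_left_mono) auto
        also have "\<dots> = eps" unfolding t_def using assms(3) e1 by simp
        finally have ly': "l y' \<le> h x" using key[OF xS] by simp
        have nyx: "norm (y - x) \<le> n * (eps + \<eta>')"
          using nle[of "y - x"] dxy n1 by (smt (verit) mult_left_mono)
        have nyxR: "norm (y - x) \<le> R" unfolding R_def using nyx e1 n1 by (smt (verit) mult_left_mono)
        have yC: "y \<in> C" unfolding C_def using xS nyxR by (intro CollectI exI[of _ x] exI[of _ "y - x"]) auto
        have "norm (t *\<^sub>R (y - x)) \<le> R" using t0 t1 nyxR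
          by simp (smt (verit) mult_left_le_one_le norm_ge_zero)
        hence y'C: "y' \<in> C" unfolding C_def y'_def using xS by (intro CollectI exI[of _ x] exI[of _ "t *\<^sub>R (y - x)"]) auto
        have "dist y y' = norm ((1 - t) *\<^sub>R (y - x))" unfolding y'_def dist_norm by (simp add: algebra_simps)
        also have "\<dots> = (1 - t) * norm (y - x)" using t1 by simp
        also have "\<dots> \<le> (1 - t) * (n * (eps + \<eta>'))" using t1 nyx by (intro mult_left_mono) auto
        also have "\<dots> = n * \<eta>'" unfolding omt using assms(3) e1 by (simp add: field_simps)
        finally have "dist y y' < \<eta>" using e2 by simp
        hence "dist (l y) (l y') < \<delta>" using eta(2)[OF y'C yC] by simp
        thus ?case using ly' p by (simp add: dist_real_def)
      qed
      have i1: "integrable L (\<lambda>p. l (snd p))"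
        using assms(8) measurable_compose[OF sndm lmeas]
        by (intro finite_measure.integrable_const_bound[where B=M] prob_space.finite_measure pL) (auto intro!: AE_I2)
      have i2: "integrable L (\<lambda>p. h (fst p) + \<delta>)"
        using hM h0 measurable_compose[OF fstm hmeas] d0
        by (intro finite_measure.integrable_const_bound[where B="M + \<delta>"] prob_space.finite_measure pL)
          (auto intro!: AE_I2 add_right_mono)
      have i3: "integrable L (\<lambda>p. h (fst p))"
        using hM h0 measurable_compose[OF fstm hmeas]
        by (intro finite_measure.integrable_const_bound[where B="M"] prob_space.finite_measure pL)
          (auto intro!: AE_I2)
      have "integral\<^sup>L P l = integral\<^sup>L L (\<lambda>p. l (snd p))"
        using integral_distr[OF sndm lmeas] sL2 by simp
      also have "\<dots> \<le> integral\<^sup>L L (\<lambda>p. h (fst p) + \<delta>)"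
        using i1 i2 AE3 by (rule integral_mono_AE)
      also have "\<dots> = integral\<^sup>L L (\<lambda>p. h (fst p)) + \<delta>"
      proof -
        have ic: "integrable L (\<lambda>p. \<delta>)" using pL
          by (simp add: finite_measure.integrable_const prob_space.finite_measure)
        have "integral\<^sup>L L (\<lambda>p. \<delta>) = \<delta>" using pL by (simp add: prob_space.prob_space)
        thus ?thesis using Bochner_Integration.integral_add[OF i3 ic] by simp
      qed
      also have "integral\<^sup>L L (\<lambda>p. h (fst p)) = integral\<^sup>L P0 h"
        using integral_distr[OF fstm hmeas] fL by simp
      finally show "integral\<^sup>L P l \<le> integral\<^sup>L P0 h + \<delta>" .
    qed
  qed
  have fin: "(SUP P \<in> W_ball P0 eps. integral\<^sup>L P l) \<le> integral\<^sup>L P0 h"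
  proof (rule cSUP_least)
    show "W_ball P0 eps \<noteq> {}" using self_in_ball[OF assms(1), of eps] assms(3) by auto
  qed (rule main)
  show ?thesis unfolding Let_def using fin unfolding h_def K_def ez_def E_def S_def by simp
qed

end
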